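(* Let $G$ be a graph, $H$ a hole of $G$, $P$ an induced path of $G$, and $u,v$ two nonadjacent vertices of $H$ not on $P$, such that (i) $v$ is adjacent to no vertex of $P$, and (ii) some internal vertex of one of the two $(u,v)$-sections of $H$ and some internal vertex of the other $(u,v)$-section of $H$ are each adjacent to a vertex of $P$. Then $G$ has a hole which does not contain $u$, contains both edges of $H$ incident to $v$, and contains a vertex of $P$ not lying on $H$.
   Context: All graphs are finite and simple. A hole of a graph is an induced cycle of length at least $4$. For two vertices $u,v$ of a cycle $H$, the two $(u,v)$-sections of $H$ are the two $u$–$v$ paths into which $H$ is divided by $u$ and $v$. *)

theory Defs
  imports Main
begin

definition graph :: "'a set \<Rightarrow> ('a \<Rightarrow> 'a \<Rightarrow> bool) \<Rightarrow> bool" where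
  "graph V E \<longleftrightarrow> finite V \<and> (\<forall>x y. E x y \<longrightarrow> E y x)
     \<and> (\<forall>x. \<not> E x x) \<and> (\<forall>x y. E x y \<longrightarrow> x \<in> V \<and> y \<in> V)"

definition induced_path :: "'a set \<Rightarrow> ('a \<Rightarrow> 'a \<Rightarrow> bool) \<Rightarrow> 'a list \<Rightarrow> bool" where
  "induced_path V E P \<longleftrightarrow> P \<noteq> [] \<and> distinct P \<and> set P \<subseteq> V
     \<and> (\<forall>i j. i < length P \<and> j < length P \<longrightarrow>
            (E (P ! i) (P ! j) \<longleftrightarrow> (i + 1 = j \<or> j + 1 = i)))"

definition hole :: "'a set \<Rightarrow> ('a \<Rightarrow> 'a \<Rightarrow> bool) \<Rightarrow> 'a list \<Rightarrow> bool" where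
  "hole V E H \<longleftrightarrow> length H \<ge> 4 \<and> distinct H \<and> set H \<subseteq> V
     \<and> (\<forall>i j. i < length H \<and> j < length H \<longrightarrow>
            (E (H ! i) (H ! j) \<longleftrightarrow>
               (j = (i + 1) mod length H \<or> i = (j + 1) mod length H)))"

definition cycle_edges :: "'a list \<Rightarrow> 'a set set" where
  "cycle_edges C = {{C ! i, C ! ((i + 1) mod length C)} | i. i < length C}"

definition cyc_seg :: "'a list \<Rightarrow> nat \<Rightarrow> nat \<Rightarrow> 'a list" where
  "cyc_seg H i d = map (\<lambda>k. H ! ((i + k) mod length H)) [0..<Suc d]"

text \<open>S is one of the two (u,v)-sections of the cycle H (as a u--v or v--u path).\<close>
definition is_section :: "'a list \<Rightarrow> 'a \<Rightarrow> 'a \<Rightarrow> 'a list \<Rightarrow> bool" where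
  "is_section H u v S \<longleftrightarrow> (\<exists>i j. i < length H \<and> j < length H \<and> H ! i = u \<and> H ! j = v \<and>
      (S = cyc_seg H i ((j + length H - i) mod length H)
       \<or> S = cyc_seg H j ((i + length H - j) mod length H)))"

definition internal :: "'a list \<Rightarrow> 'a set" where
  "internal S = set (butlast (tl S))"

end

theory Submission
  imports Defs
begin


lemma succ_nth: "successively P xs \<Longrightarrow> Suc i < length xs \<Longrightarrow> P (xs!i) (xs!Suc i)"
proof (induction xs arbitrary: i)
  case (Cons x xs)
  then show ?case by (cases i; cases xs) auto
qed auto

lemma succ_take: "successively P xs \<Longrightarrow> successively P (take k xs)"
  by (metis append_take_drop_id successively_append_iff)
lemma succ_drop: "successively P xs \<Longrightarrow> successively P (drop k xs)"
  by (metis append_take_drop_id successively_append_iff)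

definition wk :: "('a \<Rightarrow> 'a \<Rightarrow> bool) \<Rightarrow> 'a set \<Rightarrow> 'a \<Rightarrow> 'a \<Rightarrow> 'a list \<Rightarrow> bool" where
  "wk E W x y R \<longleftrightarrow> R \<noteq> [] \<and> hd R = x \<and> last R = y \<and> set R \<subseteq> W \<and> successively E R"

lemma wk_exists:
  assumes "(\<lambda>x y. E x y \<and> x \<in> W \<and> y \<in> W)\<^sup>*\<^sup>* x y" and "x \<in> W"
  shows "\<exists>R. wk E W x y R"
  using assms
proof (induction rule: rtranclp_induct)
  case base
  show ?case using base by (intro exI[of _ "[x]"]) (simp add: wk_def)
next
  case (step y z)
  then obtain R where R: "wk E W x y R" by blast
  show ?case
    by (rule exI[of _ "R @ [z]"]) (use R step in \<open>auto simp: wk_def successively_append_iff\<close>)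
qed

lemma wk_shortcut:
  assumes "wk E W x y R" "0 < i" "i \<le> j" "j < length R" "E (R!(i-1)) (R!j)"
  shows "wk E W x y (take i R @ drop j R)"
proof -
  have "i \<le> length R" using assms by auto
  have tne: "take i R \<noteq> []" using assms(2,4) by (cases R) auto
  have lt: "last (take i R) = R!(i-1)"
    using last_conv_nth[OF tne] \<open>i \<le> length R\<close> assms(2) by (simp add: min_def)
  have "hd (take i R) = hd R" using assms(2,4) by (cases R) auto
  then show ?thesis using assms lt
    by (auto simp: wk_def successively_append_iff succ_take succ_drop hd_drop_conv_nth
        dest: in_set_takeD in_set_dropD)
qed

lemma shortest_induced:
  assumes sym: "\<forall>x y. E x y \<longrightarrow> E y x" and irr: "\<forall>x. \<not> E x x"
  and "(\<lambda>x y. E x y \<and> x \<in> W \<and> y \<in> W)\<^sup>*\<^sup>* x y" and "x \<in> W"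
  shows "\<exists>R. R \<noteq> [] \<and> hd R = x \<and> last R = y \<and> set R \<subseteq> W \<and> distinct R \<and>
     (\<forall>i j. i < length R \<and> j < length R \<longrightarrow> (E (R!i) (R!j) \<longleftrightarrow> (i+1 = j \<or> j+1 = i)))"
proof -
  obtain R0 where "wk E W x y R0" using wk_exists[OF assms(3,4)] by blast
  then obtain R where R: "wk E W x y R" and min: "\<And>R'. wk E W x y R' \<Longrightarrow> length R \<le> length R'"
    using ex_has_least_nat[of "wk E W x y" R0 length] by blast
  have ne: "R \<noteq> []" and sc: "successively E R" using R by (auto simp: wk_def)
  have adj: "\<And>i. Suc i < length R \<Longrightarrow> E (R!i) (R!Suc i)" using sc succ_nth by blast
  have dist: "distinct R"
  proof (rule ccontr)
    assume "\<not> distinct R"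
    then obtain i0 j0 where ij0: "i0 < length R" "j0 < length R" "i0 \<noteq> j0" "R!i0 = R!j0"
      unfolding distinct_conv_nth by blast
    define i where "i = min i0 j0"
    define j where "j = max i0 j0"
    have ij: "i < j" "j < length R" "R!i = R!j"
      using ij0 unfolding i_def j_def by (auto simp: min_def max_def)
    show False
    proof (cases "i = 0")
      case True
      have "wk E W x y (drop j R)"
        using R ij True by (auto simp: wk_def succ_drop hd_drop_conv_nth hd_conv_nth dest: in_set_dropD)
      then show False using min[of "drop j R"] ij by simp
    next
      case False
      then have "E (R!(i-1)) (R!j)" using adj[of "i-1"] ij by simp
      then have "wk E W x y (take i R @ drop j R)" using wk_shortcut[OF R] False ij by simp
      then show False using min[of "take i R @ drop j R"] ij by simp
    qed
  qed
  have ind: "E (R!i) (R!j) \<longleftrightarrow> (i+1 = j \<or> j+1 = i)" if "i < length R" "j < length R" for i j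
  proof
    assume "i+1 = j \<or> j+1 = i"
    then show "E (R!i) (R!j)" using adj that sym by auto
  next
    assume e: "E (R!i) (R!j)"
    show "i+1 = j \<or> j+1 = i"
    proof (rule ccontr)
      assume nc: "\<not> (i+1 = j \<or> j+1 = i)"
      have "i \<noteq> j" using e irr by auto
      then consider "i + 1 < j" | "j + 1 < i" using nc by linarith
      then show False
      proof cases
        case 1
        then have "wk E W x y (take (Suc i) R @ drop j R)" using wk_shortcut[OF R, of "Suc i" j] e that by simp
        then show False using min[of "take (Suc i) R @ drop j R"] 1 that by simp
      next
        case 2
        then have "wk E W x y (take (Suc j) R @ drop i R)" using wk_shortcut[OF R, of "Suc j" i] e sym that by simp
        then show False using min[of "take (Suc j) R @ drop i R"] 2 that by simp
      qed
    qed
  qed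
  show ?thesis using R dist ind by (auto simp: wk_def)
qed



lemma modsuc: "(k::nat) < n \<Longrightarrow> (k+1) mod n = (if k+1 = n then 0 else k+1)"
proof (cases "k+1 = n")
  case True then show ?thesis by simp
next
  case False
  assume "k < n"
  then have "k + 1 < n" using False by simp
  then show ?thesis using False by simp
qed

lemma hole_of_path:
  assumes sym: "\<forall>x y. E x y \<longrightarrow> E y x" and irr: "\<forall>x. \<not> E x x"
  and dR: "distinct R" and sR: "set R \<subseteq> V"
  and ind: "\<forall>i j. i < length R \<and> j < length R \<longrightarrow> (E (R!i) (R!j) \<longleftrightarrow> (i+1 = j \<or> j+1 = i))"
  and len: "length R \<ge> 3" and vV: "v \<in> V" and vR: "v \<notin> set R"
  and vadj: "\<forall>k < length R. E v (R!k) \<longleftrightarrow> (k = 0 \<or> k = length R - 1)"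
  shows "hole V E (v # R)"
proof -
  let ?L = "length R"
  have Rne: "R \<noteq> []" using len by auto
  have main: "E ((v#R) ! i) ((v#R) ! j) \<longleftrightarrow> (j = (if i+1 = ?L+1 then 0 else i+1) \<or> i = (if j+1 = ?L+1 then 0 else j+1))"
    if "i < ?L+1" "j < ?L+1" for i j
  proof (cases i)
    case 0
    show ?thesis
    proof (cases j)
      case 0
      then show ?thesis using \<open>i=0\<close> irr len Rne by simp
    next
      case (Suc j')
      have "E v (R!j') \<longleftrightarrow> (j' = 0 \<or> j' = ?L - 1)" using vadj that Suc by simp
      moreover have "(j = (if i+1 = ?L+1 then 0 else i+1) \<or> i = (if j+1 = ?L+1 then 0 else j+1)) \<longleftrightarrow> (j' = 0 \<or> j' = ?L - 1)"
        using \<open>i=0\<close> Suc that len by auto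
      ultimately show ?thesis using \<open>i=0\<close> Suc by simp
    qed
  next
    case (Suc i')
    show ?thesis
    proof (cases j)
      case 0
      have "E (R!i') v \<longleftrightarrow> (i' = 0 \<or> i' = ?L - 1)" using vadj that Suc sym by auto
      moreover have "(j = (if i+1 = ?L+1 then 0 else i+1) \<or> i = (if j+1 = ?L+1 then 0 else j+1)) \<longleftrightarrow> (i' = 0 \<or> i' = ?L - 1)"
        using \<open>j=0\<close> Suc that len by auto
      ultimately show ?thesis using \<open>j=0\<close> Suc by simp
    next
      case (Suc j')
      have "E (R!i') (R!j') \<longleftrightarrow> (i'+1 = j' \<or> j'+1 = i')" using ind that Suc \<open>i = Suc i'\<close> by simp
      moreover have "(j = (if i+1 = ?L+1 then 0 else i+1) \<or> i = (if j+1 = ?L+1 then 0 else j+1)) \<longleftrightarrow> (i'+1 = j' \<or> j'+1 = i')"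
        using \<open>i = Suc i'\<close> Suc that len by auto
      ultimately show ?thesis using \<open>i = Suc i'\<close> Suc by simp
    qed
  qed
  have main2: "E ((v#R) ! i) ((v#R) ! j) \<longleftrightarrow> (j = (i + 1) mod length (v#R) \<or> i = (j + 1) mod length (v#R))"
    if "i < length (v#R)" "j < length (v#R)" for i j
    unfolding modsuc[OF that(1)] modsuc[OF that(2)] using main that by simp
  show ?thesis unfolding hole_def using main2 len dR vR sR vV by auto
qed

lemma edges_of_path:
  assumes "R \<noteq> []"
  shows "{v, hd R} \<in> cycle_edges (v # R)" "{last R, v} \<in> cycle_edges (v # R)"
proof -
  show "{v, hd R} \<in> cycle_edges (v # R)" unfolding cycle_edges_def
    using assms by (intro CollectI exI[of _ 0]) (auto simp: hd_conv_nth)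
  have "(v#R) ! length R = last R" using assms by (simp add: last_conv_nth nth_Cons')
  then show "{last R, v} \<in> cycle_edges (v # R)" unfolding cycle_edges_def
    by (intro CollectI exI[of _ "length R"]) auto
qed



lemma rot_inv: "(iv::nat) < n \<Longrightarrow> k < n \<Longrightarrow> ((iv+k) mod n + n - iv) mod n = k"
proof (cases "iv + k < n")
  case True
  assume "k < n"
  then show ?thesis using True by simp
next
  case False
  assume "iv < n" "k < n"
  then have "(iv+k) mod n = iv + k - n" using False by (simp add: le_mod_geq)
  then show ?thesis using False \<open>k < n\<close> by simp
qed

lemma rot_eq: "(iv::nat) < n \<Longrightarrow> x < n \<Longrightarrow> y < n \<Longrightarrow> ((iv+x) mod n = (iv+y) mod n) \<longleftrightarrow> x = y"
  by (metis rot_inv)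

lemma rch_sym:
  assumes "\<forall>x y. E x y \<longrightarrow> E y x" "(\<lambda>x y. E x y \<and> x \<in> W \<and> y \<in> W)\<^sup>*\<^sup>* a b"
  shows "(\<lambda>x y. E x y \<and> x \<in> W \<and> y \<in> W)\<^sup>*\<^sup>* b a"
  using assms(2)
proof (induction rule: rtranclp_induct)
  case (step y z)
  then show ?case using assms(1) by (auto intro: converse_rtranclp_into_rtranclp)
qed auto

lemma butlast_upt_Suc: "butlast [m..<Suc k] = [m..<k]"
  by (cases "m \<le> k") (auto simp: upt_Suc_append)

lemma internal_cyc_seg:
  "internal (cyc_seg H i dd) = (\<lambda>k. H ! ((i + k) mod length H)) ` {1..<dd}"
proof -
  have "butlast (tl (map (\<lambda>k. H ! ((i + k) mod length H)) [0..<Suc dd]))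
      = map (\<lambda>k. H ! ((i + k) mod length H)) [1..<dd]"
    by (simp only: map_tl[symmetric] map_butlast[symmetric] tl_upt butlast_upt_Suc One_nat_def)
  then show ?thesis unfolding internal_def cyc_seg_def by simp
qed



theorem lemma2p2:
  fixes V :: "'a set" and E :: "'a \<Rightarrow> 'a \<Rightarrow> bool" and H P :: "'a list" and u v :: 'a
  assumes "graph V E"
    and "hole V E H"
    and "induced_path V E P"
    and "u \<in> set H" and "v \<in> set H" and "u \<noteq> v" and "\<not> E u v"
    and "u \<notin> set P" and "v \<notin> set P"
    and "\<forall>p \<in> set P. \<not> E v p"
    and "\<exists>S1 S2 a b. is_section H u v S1 \<and> is_section H u v S2 \<and> S1 \<noteq> S2
            \<and> a \<in> internal S1 \<and> b \<in> internal S2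
            \<and> (\<exists>p \<in> set P. E a p) \<and> (\<exists>q \<in> set P. E b q)"
  shows "\<exists>C. hole V E C \<and> u \<notin> set C
            \<and> {e \<in> cycle_edges H. v \<in> e} \<subseteq> cycle_edges C
            \<and> (\<exists>x \<in> set P. x \<notin> set H \<and> x \<in> set C)"
proof -
  have sym: "\<forall>x y. E x y \<longrightarrow> E y x" and irr: "\<forall>x. \<not> E x x"
    using assms(1) unfolding graph_def by auto
  define n where "n = length H"
  have n4: "n \<ge> 4" and dH: "distinct H" and HV: "set H \<subseteq> V"
    and Hadj: "\<And>i j. i < n \<Longrightarrow> j < n \<Longrightarrow> E (H ! i) (H ! j) \<longleftrightarrow> (j = (i + 1) mod n \<or> i = (j + 1) mod n)"
    using assms(2) unfolding hole_def n_def by auto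
  have PV: "set P \<subseteq> V" and Pne: "P \<noteq> []"
    and Padj: "\<And>i. Suc i < length P \<Longrightarrow> E (P ! i) (P ! Suc i)"
    using assms(3) unfolding induced_path_def by auto
  obtain iv where iv: "iv < n" "H ! iv = v" using assms(5) unfolding n_def by (auto simp: in_set_conv_nth)
  define h where "h k = H ! ((iv + k) mod n)" for k
  have n0: "0 < n" using n4 by simp
  have h0: "h 0 = v" using iv unfolding h_def by simp
  have hadj: "E (h k) (h l) \<longleftrightarrow> (l = (k + 1) mod n \<or> k = (l + 1) mod n)" if "k < n" "l < n" for k l
  proof -
    have "E (h k) (h l) \<longleftrightarrow> ((iv + l) mod n = ((iv + k) mod n + 1) mod n \<or> (iv + k) mod n = ((iv + l) mod n + 1) mod n)"
      unfolding h_def using Hadj n0 by simp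
    also have "((iv + k) mod n + 1) mod n = (iv + (k+1) mod n) mod n" by (simp add: mod_simps add.assoc)
    also have "((iv + l) mod n + 1) mod n = (iv + (l+1) mod n) mod n" by (simp add: mod_simps add.assoc)
    finally show ?thesis using rot_eq[OF iv(1)] that n0 by simp
  qed
  have hstep: "E (h k) (h (Suc k))" for k
  proof -
    have "h k = h (k mod n)" "h (Suc k) = h ((k mod n + 1) mod n)" unfolding h_def
      by (simp_all add: mod_simps)
    moreover have "E (h (k mod n)) (h ((k mod n + 1) mod n))" using hadj n0 by simp
    ultimately show ?thesis by simp
  qed
  have hinj: "h k = h l \<Longrightarrow> k < n \<Longrightarrow> l < n \<Longrightarrow> k = l" for k l
    unfolding h_def using dH rot_eq[OF iv(1)] n0 by (simp add: nth_eq_iff_index_eq n_def)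
  have hsurj: "\<exists>k<n. h k = w" if w: "w \<in> set H" for w
  proof -
    obtain i where i: "i < n" "H ! i = w" using w unfolding n_def by (auto simp: in_set_conv_nth)
    have "(iv + (i + n - iv) mod n) mod n = (iv + (i + n - iv)) mod n" by (simp add: mod_add_right_eq)
    also have "iv + (i + n - iv) = i + n" using iv by simp
    finally have "(iv + (i + n - iv) mod n) mod n = i" using i by simp
    then show ?thesis using i n0 unfolding h_def by (intro exI[of _ "(i + n - iv) mod n"]) simp
  qed
  have hH: "h k \<in> set H" for k unfolding h_def n_def using n0 n_def by simp
  obtain d where d: "d < n" "h d = u" using hsurj assms(4) by blast
  have "d \<noteq> 0"
  proof
    assume "d = 0" then show False using d h0 assms(6) by simp
  qed
  moreover have "d \<noteq> 1" using hadj[of 0 1] n4 d h0 assms(7) sym by auto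
  moreover have "d \<noteq> n - 1" using hadj[of 0 "n-1"] n4 d h0 assms(7) sym by auto
  ultimately have d2: "2 \<le> d" "d \<le> n - 2" using d by auto
  define A1 where "A1 = h ` {1..<d}"
  define A2 where "A2 = h ` {Suc d..<n}"
  define W where "W = A1 \<union> A2 \<union> set P"
  have Hsplit: "w \<in> A1 \<union> A2" if wH: "w \<in> set H" "w \<noteq> u" "w \<noteq> v" for w
  proof -
    obtain k where k: "k < n" "h k = w" using hsurj wH by blast
    have "k \<noteq> 0" using that h0 k by metis
    have "k \<noteq> d" using that d k by metis
    then have "k \<in> {1..<d} \<or> k \<in> {Suc d..<n}" using k \<open>k \<noteq> 0\<close> by auto
    then show ?thesis using k unfolding A1_def A2_def by blast
  qed
  have A12: "\<not> E x y" if xy: "x \<in> A1" "y \<in> A2" for x y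
  proof -
    obtain k l where kl: "x = h k" "y = h l" "1 \<le> k" "k < d" "d < l" "l < n"
      using xy unfolding A1_def A2_def by auto
    have kn: "k < n" using kl d by simp
    show ?thesis
    proof
      assume "E x y"
      then have "l = (if k+1 = n then 0 else k+1) \<or> k = (if l+1 = n then 0 else l+1)"
        using hadj[OF kn kl(6)] kl unfolding modsuc[OF kn] modsuc[OF kl(6)] by simp
      then show False using kl by (auto split: if_splits)
    qed
  qed
  have A1n: "h k \<notin> A1" if "k < n" "k \<notin> {1..<d}" for k
  proof
    assume "h k \<in> A1"
    then obtain x where x: "x \<in> {1..<d}" "h k = h x" unfolding A1_def by auto
    then have "k = x" using hinj[of k x] that d by simp
    then show False using x that by simp
  qed
  have A2n: "h k \<notin> A2" if "k < n" "k \<notin> {Suc d..<n}" for k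
  proof
    assume "h k \<in> A2"
    then obtain x where x: "x \<in> {Suc d..<n}" "h k = h x" unfolding A2_def by auto
    then have "k = x" using hinj[of k x] that d by simp
    then show False using x that by simp
  qed
  have uW: "u \<notin> W" using A1n[of d] A2n[of d] d assms(8) unfolding W_def by auto
  have vW: "v \<notin> W" using A1n[of 0] A2n[of 0] h0 n0 assms(9) unfolding W_def by auto
  have WV: "W \<subseteq> V" using HV PV hH unfolding W_def A1_def A2_def by auto
  have WH: "w \<in> A1 \<union> A2" if "w \<in> W" "w \<in> set H" for w
    using Hsplit that uW vW by auto
  have vnb: "w = h 1 \<or> w = h (n - 1)" if "w \<in> W" "E v w" for w
  proof -
    have "w \<notin> set P" using that assms(10) by auto
    then have "w \<in> A1 \<union> A2" using that unfolding W_def by auto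
    then have "w \<in> set H" unfolding A1_def A2_def using hH by auto
    then obtain k where k: "k < n" "h k = w" using hsurj by blast
    then have "k = 1 mod n \<or> 0 = (if k+1 = n then 0 else k+1)"
      using hadj[of 0 k] that h0 n0 unfolding modsuc[OF k(1)] by simp
    then have "k = 1 \<or> k = n - 1" using n4 by (auto split: if_splits)
    then show ?thesis using k by auto
  qed
  have v1: "E v (h 1)" using hadj[of 0 1] h0 n4 by simp
  have v2: "E v (h (n-1))" using hadj[of 0 "n-1"] h0 n4 by simp
  have h1A1: "h 1 \<in> A1" using d2 unfolding A1_def by auto
  have h2A2: "h (n-1) \<in> A2" using d2 n4 unfolding A2_def by auto
  have h12: "\<not> E (h 1) (h (n-1))" using A12 h1A1 h2A2 by blast
  have h12': "h 1 \<noteq> h (n-1)" using hinj[of 1 "n-1"] n4 by auto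
  define rch where "rch = (\<lambda>x y. E x y \<and> x \<in> W \<and> y \<in> W)\<^sup>*\<^sup>*"
  have rch_trans: "rch x z" if "rch x y" "rch y z" for x y z
    using that unfolding rch_def by auto
  have rch_sym': "rch y x" if "rch x y" for x y
    using rch_sym[OF sym] that unfolding rch_def by blast
  have rch_E: "rch x y" if "E x y" "x \<in> W" "y \<in> W" for x y
    using that unfolding rch_def by auto
  have r1: "rch (h 1) (h (1 + m))" if "1 + m < d" for m
    using that
  proof (induction m)
    case 0 then show ?case unfolding rch_def by simp
  next
    case (Suc m)
    have "h (1 + m) \<in> W" "h (1 + Suc m) \<in> W" using Suc.prems unfolding W_def A1_def by auto
    then have "rch (h (1 + m)) (h (1 + Suc m))" using rch_E hstep by simp
    then show ?case using Suc rch_trans by simp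
  qed
  have r2: "rch (h (Suc d)) (h (Suc d + m))" if "Suc d + m < n" for m
    using that
  proof (induction m)
    case 0 then show ?case unfolding rch_def by simp
  next
    case (Suc m)
    have "h (Suc d + m) \<in> W" "h (Suc d + Suc m) \<in> W" using Suc.prems unfolding W_def A2_def by auto
    then have "rch (h (Suc d + m)) (h (Suc d + Suc m))" using rch_E hstep by simp
    then show ?case using Suc rch_trans by simp
  qed
  have rA1: "rch (h 1) x" if x: "x \<in> A1" for x
  proof -
    obtain k where "x = h k" "1 \<le> k" "k < d" using x unfolding A1_def by auto
    then show ?thesis using r1[of "k - 1"] by simp
  qed
  have rA2: "rch (h (Suc d)) x" if x: "x \<in> A2" for x
  proof -
    obtain k where "x = h k" "Suc d \<le> k" "k < n" using x unfolding A2_def by auto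
    then show ?thesis using r2[of "k - Suc d"] by simp
  qed
  have rP: "rch (P ! 0) (P ! i)" if "i < length P" for i
    using that
  proof (induction i)
    case 0 then show ?case unfolding rch_def by simp
  next
    case (Suc i)
    have "P ! i \<in> W" "P ! Suc i \<in> W" using Suc.prems unfolding W_def by auto
    then have "rch (P ! i) (P ! Suc i)" using rch_E Padj Suc.prems by simp
    then show ?case using Suc rch_trans by simp
  qed
  have rP': "rch (P ! 0) p" if "p \<in> set P" for p
    using rP that by (metis in_set_conv_nth)
  have key: "rch (h 1) (h (n-1))"
    if "a \<in> A1" "b \<in> A2" "p \<in> set P" "q \<in> set P" "E a p" "E b q" for a b p q
  proof -
    have W: "a \<in> W" "b \<in> W" "p \<in> W" "q \<in> W" using that unfolding W_def by auto
    have "rch (h 1) a" using rA1 that by simp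
    moreover have "rch a p" using rch_E W that by simp
    moreover have "rch p q" using rP' that rch_sym' rch_trans by blast
    moreover have "rch q b" using rch_E W that sym by simp
    moreover have "rch b (h (n-1))" using rA2 h2A2 that rch_sym' rch_trans by blast
    ultimately show ?thesis using rch_trans by blast
  qed
  define iu where "iu = (iv + d) mod n"
  have iu: "iu < n" "H ! iu = u" using d n0 unfolding iu_def h_def by auto
  have secform: "S = cyc_seg H iu ((iv + n - iu) mod n) \<or> S = cyc_seg H iv ((iu + n - iv) mod n)"
    if Ssec: "is_section H u v S" for S
  proof -
    obtain i j where ij: "i < n" "j < n" "H ! i = u" "H ! j = v"
      "S = cyc_seg H i ((j + n - i) mod n) \<or> S = cyc_seg H j ((i + n - j) mod n)"
      using Ssec unfolding is_section_def n_def by blast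
    have "i = iu" using ij iu dH by (metis nth_eq_iff_index_eq n_def)
    moreover have "j = iv" using ij iv dH by (metis nth_eq_iff_index_eq n_def)
    ultimately show ?thesis using ij by blast
  qed
  have formB: "internal (cyc_seg H iv ((iu + n - iv) mod n)) = A1"
  proof -
    have "(iu + n - iv) mod n = d" unfolding iu_def using rot_inv[OF iv(1) d(1)] .
    then show ?thesis unfolding internal_cyc_seg A1_def h_def n_def by simp
  qed
  have formA: "internal (cyc_seg H iu ((iv + n - iu) mod n)) \<subseteq> A2"
  proof
    fix x assume "x \<in> internal (cyc_seg H iu ((iv + n - iu) mod n))"
    then obtain k where k: "1 \<le> k" "k < (iv + n - iu) mod n" "x = H ! ((iu + k) mod n)"
      unfolding internal_cyc_seg n_def by auto
    have e: "(iv + n - iu) mod n = n - d"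
    proof (cases "iv + d < n")
      case True
      then show ?thesis unfolding iu_def using d2 by simp
    next
      case False
      then have iu': "iu = iv + d - n" unfolding iu_def using iv d by (simp add: le_mod_geq)
      have eq: "iv + n - iu = (n - d) + n" using False iv d iu' by simp
      have m: "((n - d) + n) mod n = n - d" using d2 by (simp only: mod_add_self2) simp
      show ?thesis unfolding eq by (rule m)
    qed
    have "(iu + k) mod n = (iv + (d + k)) mod n" unfolding iu_def by (simp add: mod_simps add.assoc)
    then have "x = h (d + k)" using k unfolding h_def by simp
    moreover have "d + k \<in> {Suc d..<n}" using k e by auto
    ultimately show "x \<in> A2" unfolding A2_def by auto
  qed
  have reach: "rch (h 1) (h (n-1))"
  proof -
    obtain S1 S2 a b p q where S: "is_section H u v S1" "is_section H u v S2" "S1 \<noteq> S2"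
      "a \<in> internal S1" "b \<in> internal S2" "p \<in> set P" "E a p" "q \<in> set P" "E b q"
      using assms(11) by blast
    from secform[OF S(1)] secform[OF S(2)] S(3)
    consider "S1 = cyc_seg H iu ((iv + n - iu) mod n)" "S2 = cyc_seg H iv ((iu + n - iv) mod n)"
      | "S2 = cyc_seg H iu ((iv + n - iu) mod n)" "S1 = cyc_seg H iv ((iu + n - iv) mod n)"
      by blast
    then show ?thesis
    proof cases
      case 1
      then have "b \<in> A1" "a \<in> A2" using S formA formB by auto
      then show ?thesis using key S by blast
    next
      case 2
      then have "a \<in> A1" "b \<in> A2" using S formA formB by auto
      then show ?thesis using key S by blast
    qed
  qed
  have h1W: "h 1 \<in> W" using h1A1 unfolding W_def by auto
  obtain R where R: "R \<noteq> []" "hd R = h 1" "last R = h (n-1)" "set R \<subseteq> W" "distinct R"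
    and ind: "\<forall>i j. i < length R \<and> j < length R \<longrightarrow> (E (R!i) (R!j) \<longleftrightarrow> (i+1 = j \<or> j+1 = i))"
    using shortest_induced[OF sym irr reach[unfolded rch_def] h1W] by blast
  have R0: "R ! 0 = h 1" using R by (simp add: hd_conv_nth)
  have RL: "R ! (length R - 1) = h (n-1)" using R by (simp add: last_conv_nth)
  have len: "length R \<ge> 3"
  proof (rule ccontr)
    assume "\<not> length R \<ge> 3"
    moreover have "length R \<noteq> 1" using R0 RL h12' by auto
    moreover have "length R > 0" using R by simp
    ultimately have "length R = 2" by linarith
    then have "E (R!0) (R!1)" using ind by simp
    moreover have "R!1 = h (n-1)" using RL \<open>length R = 2\<close> by simp
    ultimately show False using R0 h12 by simp
  qed
  have vadj: "\<forall>k < length R. E v (R!k) \<longleftrightarrow> (k = 0 \<or> k = length R - 1)"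
  proof (intro allI impI iffI)
    fix k assume k: "k < length R" "E v (R ! k)"
    then have "R ! k \<in> W" using R by auto
    then have "R ! k = R ! 0 \<or> R ! k = R ! (length R - 1)" using vnb k R0 RL by auto
    moreover have "0 < length R" "length R - 1 < length R" using R by auto
    ultimately show "k = 0 \<or> k = length R - 1" using R(5) k by (metis nth_eq_iff_index_eq)
  next
    fix k assume "k < length R" "k = 0 \<or> k = length R - 1"
    then show "E v (R ! k)" using R0 RL v1 v2 by auto
  qed
  have vV: "v \<in> V" using assms(5) HV by auto
  have holeC: "hole V E (v # R)"
    using hole_of_path[OF sym irr R(5) _ ind len vV _ vadj] R(4) WV vW by blast
  have uC: "u \<notin> set (v # R)" using uW R(4) assms(6) by auto
  have edges: "{e \<in> cycle_edges H. v \<in> e} \<subseteq> cycle_edges (v # R)"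
  proof
    fix e assume "e \<in> {e \<in> cycle_edges H. v \<in> e}"
    then obtain i where i: "i < n" "e = {H ! i, H ! ((i + 1) mod n)}" "v \<in> e"
      unfolding cycle_edges_def n_def by auto
    then consider "H ! i = v" | "H ! ((i + 1) mod n) = v" by auto
    then show "e \<in> cycle_edges (v # R)"
    proof cases
      case 1
      then have "i = iv" using iv i dH by (metis nth_eq_iff_index_eq n_def)
      then have "e = {v, hd R}" using i iv R unfolding h_def by simp
      then show ?thesis using edges_of_path(1)[OF R(1), of v] by simp
    next
      case 2
      moreover have "(i + 1) mod n < n" using n0 by simp
      ultimately have "(i + 1) mod n = iv" using iv dH by (metis nth_eq_iff_index_eq n_def)
      then have im: "(i + 1) mod n = iv" .
      have "(iv + (n - 1)) mod n = i"
      proof (cases "i + 1 = n")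
        case True then have "iv = 0" using im by simp
        then show ?thesis using True by simp
      next
        case False then have "iv = i+1" using im i by simp
        then have "iv + (n-1) = i + n" using n0 by simp
        then show ?thesis using i by simp
      qed
      then have "H ! i = h (n-1)" unfolding h_def by simp
      then have "e = {last R, v}" using i 2 R by auto
      then show ?thesis using edges_of_path(2)[OF R(1), of v] by simp
    qed
  qed
  have newv: "\<exists>x \<in> set P. x \<notin> set H \<and> x \<in> set (v # R)"
  proof (rule ccontr)
    assume no: "\<not> ?thesis"
    have inA: "R ! k \<in> A1 \<union> A2" if "k < length R" for k
    proof -
      have w: "R ! k \<in> W" using that R by auto
      then have "R ! k \<in> set H"
        using no that unfolding W_def A1_def A2_def by (auto simp: hH)
      then show ?thesis using WH w by blast
    qed
    have "R ! k \<in> A1" if "k < length R" for k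
      using that
    proof (induction k)
      case 0 then show ?case using R0 h1A1 by simp
    next
      case (Suc k)
      have "E (R ! k) (R ! Suc k)" using ind Suc.prems by simp
      then show ?case using inA[OF Suc.prems] Suc A12 by auto
    qed
    then have "h (n-1) \<in> A1" using RL R by (metis diff_less length_greater_0_conv zero_less_one)
    moreover have "n - 1 \<notin> {1..<d}" using d2 by auto
    moreover have "n - 1 < n" using n4 by simp
    ultimately show False using A1n[of "n-1"] by blast
  qed
  show ?thesis using holeC uC edges newv by blast
qed


end
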